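(* Let $A=[a_{ij}]$ be a real $n\times n$ matrix with zero diagonal and $f(\sigma)=\sum_{p=1}^{n-1}\sum_{q=p+1}^n a_{\sigma(p)\sigma(q)}$ its LOP objective function on $\Sigma_n$. Let $1\le k\le n$, let $i_1,\dots,i_k\in\{1,\dots,n\}$ be distinct, let $S_k=\{\sigma:\sigma(1)=i_1,\dots,\sigma(k)=i_k\}$ and $S_{k-1}=\{\sigma:\sigma(1)=i_1,\dots,\sigma(k-1)=i_{k-1}\}$, and set $\mu_k=\frac{1}{|S_k|}\sum_{\sigma\in S_k}f(\sigma)$, $\mu_{k-1}=\frac{1}{|S_{k-1}|}\sum_{\sigma\in S_{k-1}}f(\sigma)$. Then $$\mu_k-\mu_{k-1}=\frac12\sum_{j\in\{1,\dots,n\}\setminus\{i_1,\dots,i_k\}}\bigl(a_{i_kj}-a_{ji_k}\bigr).$$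
   Context: $\Sigma_n$ is the symmetric group on $\{1,\dots,n\}$; $\sigma(p)$ is the row/column index placed in position $p$; for $k=1$, $S_0=\Sigma_n$. *)

theory Defs
  imports Complex_Main "HOL-Combinatorics.Permutations"
begin

definition lop_obj :: "nat \<Rightarrow> (nat \<Rightarrow> nat \<Rightarrow> real) \<Rightarrow> (nat \<Rightarrow> nat) \<Rightarrow> real" where
  "lop_obj n a \<sigma> = (\<Sum>p = 1..n - 1. \<Sum>q = p + 1..n. a (\<sigma> p) (\<sigma> q))"

definition fixed_prefix :: "nat \<Rightarrow> (nat \<Rightarrow> nat) \<Rightarrow> nat \<Rightarrow> (nat \<Rightarrow> nat) set" where
  "fixed_prefix n i m = {\<sigma>. \<sigma> permutes {1..n} \<and> (\<forall>p\<in>{1..m}. \<sigma> p = i p)}"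

definition mean_obj :: "nat \<Rightarrow> (nat \<Rightarrow> nat \<Rightarrow> real) \<Rightarrow> (nat \<Rightarrow> nat) set \<Rightarrow> real" where
  "mean_obj n a S = (\<Sum>\<sigma>\<in>S. lop_obj n a \<sigma>) / real (card S)"

end

theory Submission
  imports Defs
begin

lemma lop_alt:
  assumes s: "\<sigma> permutes {1..n}"
  shows "lop_obj n a \<sigma> = (\<Sum>x\<in>{1..n}. \<Sum>y\<in>{1..n}. a x y * (if inv \<sigma> x < inv \<sigma> y then 1 else 0))"
proof -
  have si: "\<And>x. \<sigma> (inv \<sigma> x) = x" by (rule permutes_inverses(1)[OF s])
  have "lop_obj n a \<sigma> = (\<Sum>p\<in>{1..n}. \<Sum>q\<in>{1..n}. if p < q then a (\<sigma> p) (\<sigma> q) else 0)"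
  proof -
    have e1: "(\<Sum>q\<in>{1..n}. if p < q then a (\<sigma> p) (\<sigma> q) else 0) = (\<Sum>q = p + 1..n. a (\<sigma> p) (\<sigma> q))"
      if "p \<ge> 1" for p
    proof -
      have "{q\<in>{1..n}. p < q} = {p+1..n}" using that by auto
      then show ?thesis by (simp add: sum.inter_filter[symmetric])
    qed
    have "(\<Sum>p\<in>{1..n}. \<Sum>q\<in>{1..n}. if p < q then a (\<sigma> p) (\<sigma> q) else 0)
        = (\<Sum>p\<in>{1..n}. \<Sum>q = p + 1..n. a (\<sigma> p) (\<sigma> q))"
      by (rule sum.cong[OF refl], rule e1) simp
    also have "\<dots> = (\<Sum>p = 1..n - 1. \<Sum>q = p + 1..n. a (\<sigma> p) (\<sigma> q))"
    proof (cases n)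
      case 0 then show ?thesis by simp
    next
      case (Suc m)
      then have "{1..n} = insert n {1..n-1}" by auto
      then show ?thesis using Suc by simp
    qed
    finally show ?thesis unfolding lop_obj_def by simp
  qed
  also have "\<dots> = (\<Sum>x\<in>{1..n}. \<Sum>q\<in>{1..n}. if inv \<sigma> x < q then a x (\<sigma> q) else 0)"
    by (subst sum.permute[OF permutes_inv[OF s], where g="\<lambda>p. \<Sum>q\<in>{1..n}. if p < q then a (\<sigma> p) (\<sigma> q) else 0"]) (simp add: si cong: if_cong)
  also have "\<dots> = (\<Sum>x\<in>{1..n}. \<Sum>y\<in>{1..n}. if inv \<sigma> x < inv \<sigma> y then a x y else 0)"
    by (rule sum.cong[OF refl], subst sum.permute[OF permutes_inv[OF s], where g="\<lambda>q. if inv \<sigma> x < q then a x (\<sigma> q) else 0" for x]) (simp add: si cong: if_cong)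
  finally show ?thesis by (simp add: if_distrib cong: if_cong)
qed

lemma fp_nonempty:
  assumes m: "m \<le> n" and inj: "inj_on i {1..m}" and rng: "i ` {1..m} \<subseteq> {1..n}"
  shows "fixed_prefix n i m \<noteq> {}"
proof -
  define P where "P = {1..(m::nat)}"
  define U where "U = {1..(n::nat)}"
  have PU: "P \<subseteq> U" using m by (auto simp: P_def U_def)
  have iPU: "i ` P \<subseteq> U" using rng by (simp add: P_def U_def)
  have ci: "card (i ` P) = card P" using inj by (simp add: card_image P_def)
  have "card (U - P) = card (U - i ` P)"
    using PU iPU ci by (simp add: card_Diff_subset finite_subset U_def P_def)
  then obtain h where h: "bij_betw h (U - P) (U - i ` P)"
    using finite_same_card_bij[of "U - P" "U - i ` P"] by (auto simp: U_def)
  define \<sigma> where "\<sigma> p = (if p \<in> P then i p else if p \<in> U then h p else p)" for p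
  have b1: "bij_betw \<sigma> P (i ` P)"
  proof -
    have "bij_betw i P (i ` P)" using inj_on_imp_bij_betw[OF inj] by (simp add: P_def)
    moreover have "\<And>p. p \<in> P \<Longrightarrow> \<sigma> p = i p" by (simp add: \<sigma>_def)
    ultimately show ?thesis using bij_betw_cong by metis
  qed
  have b2: "bij_betw \<sigma> (U - P) (U - i ` P)"
  proof -
    have "\<And>p. p \<in> U - P \<Longrightarrow> \<sigma> p = h p" by (simp add: \<sigma>_def)
    then show ?thesis using h bij_betw_cong by metis
  qed
  have "bij_betw \<sigma> (P \<union> (U - P)) (i ` P \<union> (U - i ` P))"
    by (rule bij_betw_combine[OF b1 b2]) auto
  moreover have "P \<union> (U - P) = U" "i ` P \<union> (U - i ` P) = U" using PU iPU by auto
  ultimately have "bij_betw \<sigma> U U" by simp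
  then have "\<sigma> permutes U" by (rule bij_imp_permutes) (use PU in \<open>auto simp: \<sigma>_def\<close>)
  then have "\<sigma> \<in> fixed_prefix n i m" by (simp add: fixed_prefix_def U_def \<sigma>_def P_def)
  then show ?thesis by auto
qed

lemma fp_finite: "finite (fixed_prefix n i m)"
  by (rule finite_subset[OF _ finite_permutations[of "{1..n}"]]) (auto simp: fixed_prefix_def)

lemma fp_pos_in:
  assumes "\<sigma> \<in> fixed_prefix n i m" "p \<in> {1..m}"
  shows "inv \<sigma> (i p) = p"
proof -
  have s: "\<sigma> permutes {1..n}" and e: "\<sigma> p = i p" using assms by (auto simp: fixed_prefix_def)
  show ?thesis using permutes_inverses(2)[OF s, of p] e by simp
qed

lemma fp_pos_out:
  assumes "\<sigma> \<in> fixed_prefix n i m" "z \<in> {1..n}" "z \<notin> i ` {1..m}"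
  shows "inv \<sigma> z > m"
proof (rule ccontr)
  have s: "\<sigma> permutes {1..n}" using assms by (auto simp: fixed_prefix_def)
  assume "\<not> m < inv \<sigma> z"
  moreover have "inv \<sigma> z \<in> {1..n}" by (subst permutes_in_image[OF permutes_inv[OF s]]) (rule assms(2))
  ultimately have "inv \<sigma> z \<in> {1..m}" by auto
  then have "\<sigma> (inv \<sigma> z) = i (inv \<sigma> z)" using assms(1) by (auto simp: fixed_prefix_def)
  then have "z = i (inv \<sigma> z)" using permutes_inverses(1)[OF s] by simp
  then show False using assms(3) \<open>inv \<sigma> z \<in> {1..m}\<close> by blast
qed

lemma fp_half:
  assumes x: "x \<in> {1..n} - i ` {1..m}" and y: "y \<in> {1..n} - i ` {1..m}" and xy: "x \<noteq> y"
  shows "2 * card {\<sigma> \<in> fixed_prefix n i m. inv \<sigma> x < inv \<sigma> y} = card (fixed_prefix n i m)"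
proof -
  define S where "S = fixed_prefix n i m"
  define \<tau> where "\<tau> = Transposition.transpose x y"
  define A where "A = {\<sigma> \<in> S. inv \<sigma> x < inv \<sigma> y}"
  define B where "B = {\<sigma> \<in> S. inv \<sigma> y < inv \<sigma> x}"
  have tp: "\<tau> permutes {1..n}" using x y by (simp add: \<tau>_def permutes_swap_id)
  have key: "\<tau> \<circ> \<sigma> \<in> S \<and> inv (\<tau> \<circ> \<sigma>) x = inv \<sigma> y \<and> inv (\<tau> \<circ> \<sigma>) y = inv \<sigma> x" if "\<sigma> \<in> S" for \<sigma>
  proof -
    have s: "\<sigma> permutes {1..n}" using that by (auto simp: S_def fixed_prefix_def)
    have "\<tau> \<circ> \<sigma> permutes {1..n}" by (rule permutes_compose[OF s tp])
    moreover have "\<forall>p\<in>{1..m}. (\<tau> \<circ> \<sigma>) p = i p"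
    proof
      fix p assume p: "p \<in> {1..m}"
      then have "\<sigma> p = i p" using that by (auto simp: S_def fixed_prefix_def)
      moreover have "i p \<noteq> x" "i p \<noteq> y" using x y p by auto
      ultimately show "(\<tau> \<circ> \<sigma>) p = i p" by (simp add: \<tau>_def)
    qed
    moreover have "inv (\<tau> \<circ> \<sigma>) = inv \<sigma> \<circ> \<tau>"
      using o_inv_distrib[OF permutes_bij[OF tp] permutes_bij[OF s]] by (simp add: \<tau>_def)
    ultimately show ?thesis by (simp add: S_def fixed_prefix_def \<tau>_def)
  qed
  have tt: "\<tau> \<circ> (\<tau> \<circ> \<sigma>) = \<sigma>" for \<sigma> :: "nat \<Rightarrow> nat" by (simp add: \<tau>_def comp_assoc[symmetric])
  have injc: "inj_on (\<lambda>\<sigma>. \<tau> \<circ> \<sigma>) X" for X :: "(nat \<Rightarrow> nat) set"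
  proof (rule inj_onI)
    fix u v :: "nat \<Rightarrow> nat" assume "u \<in> X" "v \<in> X" "\<tau> \<circ> u = \<tau> \<circ> v"
    then have "\<tau> \<circ> (\<tau> \<circ> u) = \<tau> \<circ> (\<tau> \<circ> v)" by simp
    then show "u = v" by (simp only: tt)
  qed
  have fin: "finite S" by (simp add: S_def fp_finite)
  have "(\<lambda>\<sigma>. \<tau> \<circ> \<sigma>) ` A \<subseteq> B" using key by (auto simp: A_def B_def)
  then have c1: "card A \<le> card B"
  proof -
    have "finite B" using fin by (simp add: B_def)
    have "card A = card ((\<lambda>\<sigma>. \<tau> \<circ> \<sigma>) ` A)" by (rule card_image[OF injc, symmetric])
    also have "\<dots> \<le> card B" by (rule card_mono[OF \<open>finite B\<close> \<open>(\<lambda>\<sigma>. \<tau> \<circ> \<sigma>) ` A \<subseteq> B\<close>])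
    finally show ?thesis .
  qed
  have "(\<lambda>\<sigma>. \<tau> \<circ> \<sigma>) ` B \<subseteq> A" using key by (auto simp: A_def B_def)
  then have c2: "card B \<le> card A"
  proof -
    have "finite A" using fin by (simp add: A_def)
    have "card B = card ((\<lambda>\<sigma>. \<tau> \<circ> \<sigma>) ` B)" by (rule card_image[OF injc, symmetric])
    also have "\<dots> \<le> card A" by (rule card_mono[OF \<open>finite A\<close> \<open>(\<lambda>\<sigma>. \<tau> \<circ> \<sigma>) ` B \<subseteq> A\<close>])
    finally show ?thesis .
  qed
  have "A \<union> B = S"
  proof -
    have "inv \<sigma> x \<noteq> inv \<sigma> y" if "\<sigma> \<in> S" for \<sigma>
    proof -
      have s: "\<sigma> permutes {1..n}" using that by (auto simp: S_def fixed_prefix_def)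
      show ?thesis using xy permutes_inverses(1)[OF s, of x] permutes_inverses(1)[OF s, of y] by auto
    qed
    then show ?thesis unfolding A_def B_def using nat_neq_iff by blast
  qed
  moreover have "A \<inter> B = {}" by (auto simp: A_def B_def)
  ultimately have "card A + card B = card S"
    using fin card_Un_disjoint[of A B] by (simp add: A_def B_def)
  then show ?thesis using c1 c2 by (simp add: A_def S_def)
qed

definition gg :: "(nat \<Rightarrow> nat) \<Rightarrow> nat \<Rightarrow> nat \<Rightarrow> nat \<Rightarrow> real" where
  "gg i m x y = (if x \<in> i ` {1..m} then
      (if y \<in> i ` {1..m} then (if inv_into {1..m} i x < inv_into {1..m} i y then 1 else 0) else 1)
    else if y \<in> i ` {1..m} then 0 else if x \<noteq> y then 1/2 else 0)"

lemma fp_count: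
  assumes inj: "inj_on i {1..m}" and x: "x \<in> {1..n}" and y: "y \<in> {1..n}"
  shows "(\<Sum>\<sigma>\<in>fixed_prefix n i m. if inv \<sigma> x < inv \<sigma> y then 1 else 0 :: real)
     = real (card (fixed_prefix n i m)) * gg i m x y"
proof (cases "x \<in> i ` {1..m} \<or> y \<in> i ` {1..m}")
  case True
  have "(if inv \<sigma> x < inv \<sigma> y then 1 else 0 :: real) = gg i m x y" if s: "\<sigma> \<in> fixed_prefix n i m" for \<sigma>
  proof -
    consider (a) p q where "p \<in> {1..m}" "q \<in> {1..m}" "x = i p" "y = i q"
      | (b) p where "p \<in> {1..m}" "x = i p" "y \<notin> i ` {1..m}"
      | (c) q where "q \<in> {1..m}" "y = i q" "x \<notin> i ` {1..m}"
      using True by blast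
    then show ?thesis
    proof cases
      case a
      then show ?thesis using fp_pos_in[OF s, of p] fp_pos_in[OF s, of q] inj
        by (simp add: gg_def inv_into_f_f)
    next
      case b
      then show ?thesis using fp_pos_in[OF s, of p] fp_pos_out[OF s y] by (auto simp: gg_def)
    next
      case c
      then show ?thesis using fp_pos_in[OF s, of q] fp_pos_out[OF s x] by (auto simp: gg_def)
    qed
  qed
  then show ?thesis by simp
next
  case False
  show ?thesis
  proof (cases "x = y")
    case True then show ?thesis using False by (simp add: gg_def)
  next
    case xy: False
    have "(\<Sum>\<sigma>\<in>fixed_prefix n i m. if inv \<sigma> x < inv \<sigma> y then 1 else 0 :: real)
       = real (card {\<sigma> \<in> fixed_prefix n i m. inv \<sigma> x < inv \<sigma> y})"
      using fp_finite by (simp add: sum.inter_filter[symmetric])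
    also have "\<dots> = real (card (fixed_prefix n i m)) / 2"
      using fp_half[of x n i m y] x y False xy by simp
    finally show ?thesis using False xy by (simp add: gg_def)
  qed
qed

lemma fp_mean:
  assumes m: "m \<le> n" and inj: "inj_on i {1..m}" and rng: "i ` {1..m} \<subseteq> {1..n}"
  shows "mean_obj n a (fixed_prefix n i m) = (\<Sum>x\<in>{1..n}. \<Sum>y\<in>{1..n}. a x y * gg i m x y)"
proof -
  define S where "S = fixed_prefix n i m"
  have ne: "card S \<noteq> 0" using fp_nonempty[OF m inj rng] fp_finite by (simp add: S_def)
  have "(\<Sum>\<sigma>\<in>S. lop_obj n a \<sigma>)
      = (\<Sum>\<sigma>\<in>S. \<Sum>x\<in>{1..n}. \<Sum>y\<in>{1..n}. a x y * (if inv \<sigma> x < inv \<sigma> y then 1 else 0))"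
    by (rule sum.cong[OF refl], rule lop_alt) (auto simp: S_def fixed_prefix_def)
  also have "\<dots> = (\<Sum>x\<in>{1..n}. \<Sum>y\<in>{1..n}. \<Sum>\<sigma>\<in>S. a x y * (if inv \<sigma> x < inv \<sigma> y then 1 else 0))"
    by (subst sum.swap, subst (2) sum.swap, rule refl)
  also have "\<dots> = (\<Sum>x\<in>{1..n}. \<Sum>y\<in>{1..n}. a x y * (real (card S) * gg i m x y))"
    by (intro sum.cong refl) (simp add: sum_distrib_left[symmetric] fp_count[OF inj] S_def)
  also have "\<dots> = real (card S) * (\<Sum>x\<in>{1..n}. \<Sum>y\<in>{1..n}. a x y * gg i m x y)"
    by (simp add: sum_distrib_left algebra_simps)
  finally show ?thesis using ne by (simp add: mean_obj_def S_def)
qed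

lemma gg_diff:
  assumes k: "1 \<le> k" and inj: "inj_on i {1..k}"
  shows "gg i k x y - gg i (k - 1) x y =
    (if x = i k \<and> y \<notin> i ` {1..k} then 1/2 else if x \<notin> i ` {1..k} \<and> y = i k then -1/2 else 0)"
proof -
  have I: "i ` {1..k} = insert (i k) (i ` {1..k-1})"
  proof -
    have "{1..k} = insert k {1..k-1}" using k by auto
    then have "i ` {1..k} = i ` insert k {1..k-1}" by (rule arg_cong)
    then show ?thesis by (simp only: image_insert)
  qed
  have cn: "i k \<notin> i ` {1..k-1}"
  proof
    assume "i k \<in> i ` {1..k-1}"
    then obtain p where p: "p \<in> {1..k-1}" "i k = i p" by blast
    have "k = p" by (rule inj_onD[OF inj p(2)]) (use p k in auto)
    then show False using p k by auto
  qed
  have pk: "inv_into {1..k} i (i p) = p" "inv_into {1..k-1} i (i p) = p" if "p \<in> {1..k-1}" for p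
    using that inj inv_into_f_f[OF inj] inv_into_f_f[OF inj_on_subset[OF inj, of "{1..k-1}"]] by auto
  have kk: "inv_into {1..k} i (i k) = k" using inv_into_f_f[OF inj] k by auto
  have cz: thesis if
      P: "z \<in> i ` {1..k} \<Longrightarrow> z \<in> i ` {1..k-1} \<Longrightarrow> z \<noteq> i k \<Longrightarrow>
          inv_into {1..k} i z = inv_into {1..k-1} i z \<Longrightarrow> inv_into {1..k-1} i z < k \<Longrightarrow> thesis"
    and K: "z \<in> i ` {1..k} \<Longrightarrow> z \<notin> i ` {1..k-1} \<Longrightarrow> z = i k \<Longrightarrow> inv_into {1..k} i z = k \<Longrightarrow> thesis"
    and O: "z \<notin> i ` {1..k} \<Longrightarrow> z \<notin> i ` {1..k-1} \<Longrightarrow> z \<noteq> i k \<Longrightarrow> thesis"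
    for z thesis
  proof (cases "z \<in> i ` {1..k-1}")
    case True
    then obtain p where p: "p \<in> {1..k-1}" "z = i p" by blast
    have "p < k" using p k by auto
    moreover have "z \<noteq> i k" using cn True by metis
    moreover have "z \<in> i ` {1..k}" using True I by auto
    ultimately show ?thesis using P p pk[OF p(1)] True by auto
  next
    case False
    show ?thesis
    proof (cases "z = i k")
      case True then show ?thesis using K False I kk by auto
    next
      case F2: False then show ?thesis using O False I by auto
    qed
  qed
  show ?thesis
    by (rule cz[of x]; rule cz[of y]) (simp_all add: gg_def)
qed

theorem proposition6:
  fixes n k :: nat and a :: "nat \<Rightarrow> nat \<Rightarrow> real" and i :: "nat \<Rightarrow> nat"
  assumes diag: "\<forall>j\<in>{1..n}. a j j = 0"
    and k: "1 \<le> k" "k \<le> n"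
    and inj: "inj_on i {1..k}"
    and rng: "i ` {1..k} \<subseteq> {1..n}"
  shows "mean_obj n a (fixed_prefix n i k) - mean_obj n a (fixed_prefix n i (k - 1))
         = (1/2) * (\<Sum>j\<in>{1..n} - i ` {1..k}. a (i k) j - a j (i k))"
proof -
  define U where "U = {1..n}"
  define R where "R = U - i ` {1..k}"
  define c where "c = i k"
  have fU: "finite U" by (simp add: U_def)
  have cU: "c \<in> U" using rng k unfolding c_def U_def by (meson atLeastAtMost_iff image_subset_iff order_refl)
  have cR: "c \<notin> R" by (simp add: R_def c_def) (use k in auto)
  have inj1: "inj_on i {1..k-1}" by (rule inj_on_subset[OF inj]) auto
  have rng1: "i ` {1..k-1} \<subseteq> {1..n}" using rng by (meson atLeastatMost_subset_iff diff_le_self image_mono order_refl subset_trans)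
  have m1: "mean_obj n a (fixed_prefix n i (k-1)) = (\<Sum>x\<in>{1..n}. \<Sum>y\<in>{1..n}. a x y * gg i (k-1) x y)"
    using fp_mean[of "k-1" n i a, OF _ inj1 rng1] k by simp
  have "mean_obj n a (fixed_prefix n i k) - mean_obj n a (fixed_prefix n i (k - 1))
     = (\<Sum>x\<in>U. \<Sum>y\<in>U. a x y * (gg i k x y - gg i (k-1) x y))"
    unfolding m1 fp_mean[OF k(2) inj rng] U_def
    by (simp add: sum_subtractf[symmetric] right_diff_distrib)
  also have "\<dots> = (\<Sum>x\<in>U. \<Sum>y\<in>U. (if x = c then (if y \<in> R then a x y / 2 else 0) else 0)
                 + (if y = c then (if x \<in> R then - (a x y / 2) else 0) else 0))"
  proof (intro sum.cong refl)
    fix x y assume x: "x \<in> U" and y: "y \<in> U"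
    have D: "gg i k x y - gg i (k-1) x y = (if x = c \<and> y \<in> R then 1/2 else if x \<in> R \<and> y = c then -1/2 else 0)"
      unfolding gg_diff[OF k(1) inj] R_def c_def using x y by simp
    show "a x y * (gg i k x y - gg i (k-1) x y) = (if x = c then (if y \<in> R then a x y / 2 else 0) else 0)
                 + (if y = c then (if x \<in> R then - (a x y / 2) else 0) else 0)"
      unfolding D using cR by (cases "x = c"; cases "y = c") auto
  qed
  also have "\<dots> = (\<Sum>x\<in>U. \<Sum>y\<in>U. (if x = c then (if y \<in> R then a x y / 2 else 0) else 0))
                 + (\<Sum>y\<in>U. \<Sum>x\<in>U. (if y = c then (if x \<in> R then - (a x y / 2) else 0) else 0))"
    by (simp add: sum.distrib) (rule sum.swap)
  also have "\<dots> = (\<Sum>y\<in>U. if y \<in> R then a c y / 2 else 0) + (\<Sum>x\<in>U. if x \<in> R then - (a x c / 2) else 0)"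
  proof -
    have e: "(\<Sum>y\<in>U. if P then f y else 0) = (if P then (\<Sum>y\<in>U. f y) else 0)" for P and f :: "nat \<Rightarrow> real"
      by (cases P) simp_all
    show ?thesis unfolding e using cU by (simp add: sum.delta[OF fU])
  qed
  also have "\<dots> = (\<Sum>y\<in>R. a c y / 2) + (\<Sum>x\<in>R. - (a x c / 2))"
  proof -
    have RU: "{y\<in>U. y\<in>R} = R" by (auto simp: R_def)
    show ?thesis by (simp only: sum.inter_filter[OF fU, symmetric] RU)
  qed
  also have "\<dots> = (1/2) * (\<Sum>j\<in>R. a c j - a j c)"
  proof -
    have "(\<Sum>y\<in>R. a c y / 2) = (\<Sum>y\<in>R. a c y) / 2" by (rule sum_divide_distrib[symmetric])
    moreover have "(\<Sum>x\<in>R. - (a x c / 2)) = - ((\<Sum>x\<in>R. a x c) / 2)"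
      by (simp only: sum_negf sum_divide_distrib[symmetric])
    moreover have "(\<Sum>j\<in>R. a c j - a j c) = (\<Sum>j\<in>R. a c j) - (\<Sum>j\<in>R. a j c)"
      by (rule sum_subtractf)
    ultimately show ?thesis by linarith
  qed
  finally show ?thesis by (simp only: R_def U_def c_def)
qed

end
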